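(* Let $C$ be a finite set. Let $\mathbb P$ be a probability measure on $\{0,1\}^C$ of the form $\bigotimes_{i\in C}\mathrm{Bernoulli}(p_i)$. Let $\mathcal E_1$ and $\mathcal E_2$ be two increasing subsets of $\{0,1\}^C$. Let $\mathbf P$ be a probability measure on $\{0,1\}^{C\times\{1,2\}}$ of the form $\bigotimes_{i\in C}\rho_i$, where each $\rho_i$ is a probability measure on $\{0,1\}^{\{i\}\times\{1,2\}}\cong\{0,1\}^2$ both of whose marginals are Bernoulli distributions of parameter at least $p_i$. Then $\mathbb P(\mathcal E_1\circ\mathcal E_2)\le \mathbf P(\mathcal E_1\times\mathcal E_2)$, where $\mathcal E_1\times\mathcal E_2$ denotes the set of $\omega\in\{0,1\}^{C\times\{1,2\}}$ with $(\omega_{(i,1)})_{i\in C}\in\mathcal E_1$ and $(\omega_{(i,2)})_{i\in C}\in\mathcal E_2$.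
   Context: A subset $\mathcal E\subset\{0,1\}^C$ is increasing if $\omega\in\mathcal E$ and $\omega\le\omega'$ coordinatewise imply $\omega'\in\mathcal E$. The disjoint occurrence $\mathcal E_1\circ\mathcal E_2$ is the set of $\omega\in\{0,1\}^C$ for which there exist disjoint subsets $P_1,P_2\subset C$ such that, for $j\in\{1,2\}$, every $\omega'\in\{0,1\}^C$ agreeing with $\omega$ on $P_j$ belongs to $\mathcal E_j$. *)

theory Defs
  imports "HOL-Probability.Probability"
begin

text \<open>Configurations in {0,1}^C are encoded as functions 'c => bool which are
  False outside C (the default value used by Pi_pmf).\<close>

definition config :: "'c set \<Rightarrow> ('c \<Rightarrow> bool) set" where
  "config C = {\<omega>. \<forall>i. i \<notin> C \<longrightarrow> \<omega> i = False}"

definition increasing :: "'c set \<Rightarrow> ('c \<Rightarrow> bool) set \<Rightarrow> bool" where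
  "increasing C E \<longleftrightarrow> E \<subseteq> config C \<and>
     (\<forall>\<omega> \<in> E. \<forall>\<omega>' \<in> config C. (\<forall>i \<in> C. \<omega> i \<longrightarrow> \<omega>' i) \<longrightarrow> \<omega>' \<in> E)"

definition disj_occ :: "'c set \<Rightarrow> ('c \<Rightarrow> bool) set \<Rightarrow> ('c \<Rightarrow> bool) set \<Rightarrow> ('c \<Rightarrow> bool) set" where
  "disj_occ C E1 E2 = {\<omega> \<in> config C. \<exists>P1 P2. P1 \<subseteq> C \<and> P2 \<subseteq> C \<and> P1 \<inter> P2 = {} \<and>
     (\<forall>\<omega>' \<in> config C. (\<forall>i \<in> P1. \<omega>' i = \<omega> i) \<longrightarrow> \<omega>' \<in> E1) \<and>
     (\<forall>\<omega>' \<in> config C. (\<forall>i \<in> P2. \<omega>' i = \<omega> i) \<longrightarrow> \<omega>' \<in> E2)}"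

text \<open>{0,1}^(C x {1,2}) is encoded as functions 'c => bool x bool, equal to
  (False,False) outside C; omega(i,1) = fst (omega i), omega(i,2) = snd (omega i).\<close>

definition prod_event :: "'c set \<Rightarrow> ('c \<Rightarrow> bool) set \<Rightarrow> ('c \<Rightarrow> bool) set \<Rightarrow> ('c \<Rightarrow> bool \<times> bool) set" where
  "prod_event C E1 E2 = {\<eta>. (\<forall>i. i \<notin> C \<longrightarrow> \<eta> i = (False, False)) \<and>
     (\<lambda>i. fst (\<eta> i)) \<in> E1 \<and> (\<lambda>i. snd (\<eta> i)) \<in> E2}"

end

theory Submission
  imports Defs
begin

definition wit :: "'c set \<Rightarrow> ('c \<Rightarrow> bool) set \<Rightarrow> 'c set \<Rightarrow> ('c \<Rightarrow> bool) \<Rightarrow> bool" where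
  "wit C E P w \<longleftrightarrow> (\<forall>\<omega>' \<in> config C. (\<forall>i \<in> P. \<omega>' i = w i) \<longrightarrow> \<omega>' \<in> E)"

lemma witI: "(\<And>\<omega>'. \<omega>' \<in> config C \<Longrightarrow> (\<And>i. i \<in> P \<Longrightarrow> \<omega>' i = w i) \<Longrightarrow> \<omega>' \<in> E) \<Longrightarrow> wit C E P w"
  unfolding wit_def by blast

lemma witD: "wit C E P w \<Longrightarrow> \<omega>' \<in> config C \<Longrightarrow> (\<And>i. i \<in> P \<Longrightarrow> \<omega>' i = w i) \<Longrightarrow> \<omega>' \<in> E"
  unfolding wit_def by blast

definition GG :: "'c set \<Rightarrow> 'c set \<Rightarrow> ('c \<Rightarrow> bool) set \<Rightarrow> ('c \<Rightarrow> bool) set \<Rightarrow> ('c \<Rightarrow> bool \<times> bool) set" where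
  "GG C D E1 E2 = {\<eta>. (\<forall>i. i \<notin> C \<longrightarrow> \<eta> i = (False, False)) \<and>
     (\<exists>P1 P2. P1 \<subseteq> C \<and> P2 \<subseteq> C \<and> P1 \<inter> P2 \<subseteq> D \<and>
       wit C E1 P1 (\<lambda>i. fst (\<eta> i)) \<and> wit C E2 P2 (\<lambda>i. snd (\<eta> i)))}"

lemma GG_mono: "D \<subseteq> D' \<Longrightarrow> GG C D E1 E2 \<subseteq> GG C D' E1 E2"
  unfolding GG_def by blast

lemma incD:
  assumes "increasing C E" "\<omega> \<in> E" "\<omega>' \<in> config C" "\<And>i. i \<in> C \<Longrightarrow> \<omega> i \<Longrightarrow> \<omega>' i"
  shows "\<omega>' \<in> E"
proof -
  have "\<forall>\<omega> \<in> E. \<forall>\<omega>' \<in> config C. (\<forall>i \<in> C. \<omega> i \<longrightarrow> \<omega>' i) \<longrightarrow> \<omega>' \<in> E"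
    using assms(1) unfolding increasing_def by (rule conjunct2)
  then show ?thesis using assms(2,3,4) by blast
qed

lemma GG_I:
  assumes "\<forall>i. i \<notin> C \<longrightarrow> \<eta> i = (False, False)" "P1 \<subseteq> C" "P2 \<subseteq> C" "P1 \<inter> P2 \<subseteq> D"
    "wit C E1 P1 (\<lambda>i. fst (\<eta> i))" "wit C E2 P2 (\<lambda>i. snd (\<eta> i))"
  shows "\<eta> \<in> GG C D E1 E2"
  unfolding GG_def using assms by blast

lemma GG_E:
  assumes "\<eta> \<in> GG C D E1 E2"
  obtains P1 P2 where "\<forall>i. i \<notin> C \<longrightarrow> \<eta> i = (False, False)" "P1 \<subseteq> C" "P2 \<subseteq> C" "P1 \<inter> P2 \<subseteq> D"
    "wit C E1 P1 (\<lambda>i. fst (\<eta> i))" "wit C E2 P2 (\<lambda>i. snd (\<eta> i))"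
  using assms unfolding GG_def by blast

lemma cf_upd:
  assumes "\<forall>i. i \<notin> C \<longrightarrow> (f(j:=a)) i = (False, False)" "j \<in> C"
  shows "\<forall>i. i \<notin> C \<longrightarrow> (f(j:=b)) i = (False, False)"
proof (intro allI impI)
  fix i assume i: "i \<notin> C"
  then have "i \<noteq> j" using assms(2) by blast
  moreover have "(f(j:=a)) i = (False, False)" using assms(1) i by blast
  ultimately show "(f(j:=b)) i = (False, False)" by simp
qed

lemma L1:
  assumes "f(j:=(False,False)) \<in> GG C D E1 E2" "j \<in> C" "increasing C E1" "increasing C E2"
  shows "f(j:=y) \<in> GG C D E1 E2"
proof -
  obtain P1 P2 where cf: "\<forall>i. i \<notin> C \<longrightarrow> (f(j:=(False,False))) i = (False, False)"
    and P: "P1 \<subseteq> C" "P2 \<subseteq> C" "P1 \<inter> P2 \<subseteq> D"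
    and W1: "wit C E1 P1 (\<lambda>i. fst ((f(j:=(False,False))) i))"
    and W2: "wit C E2 P2 (\<lambda>i. snd ((f(j:=(False,False))) i))"
    using assms(1) by (rule GG_E)
  have c: "\<omega>'(j:=False) \<in> config C" if "\<omega>' \<in> config C" for \<omega>'
    using that unfolding config_def by simp
  show ?thesis
  proof (rule GG_I[OF cf_upd[OF cf assms(2)] P])
    show "wit C E1 P1 (\<lambda>i. fst ((f(j:=y)) i))"
    proof (rule witI)
      fix \<omega>' assume o: "\<omega>' \<in> config C" and a: "\<And>i. i \<in> P1 \<Longrightarrow> \<omega>' i = fst ((f(j:=y)) i)"
      have "\<omega>'(j:=False) \<in> E1"
      proof (rule witD[OF W1 c[OF o]])
        fix i assume "i \<in> P1" then show "(\<omega>'(j:=False)) i = fst ((f(j:=(False,False))) i)"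
          using a by (cases "i = j") simp_all
      qed
      then show "\<omega>' \<in> E1" by (rule incD[OF assms(3) _ o]) (simp split: if_splits)
    qed
    show "wit C E2 P2 (\<lambda>i. snd ((f(j:=y)) i))"
    proof (rule witI)
      fix \<omega>' assume o: "\<omega>' \<in> config C" and a: "\<And>i. i \<in> P2 \<Longrightarrow> \<omega>' i = snd ((f(j:=y)) i)"
      have "\<omega>'(j:=False) \<in> E2"
      proof (rule witD[OF W2 c[OF o]])
        fix i assume "i \<in> P2" then show "(\<omega>'(j:=False)) i = snd ((f(j:=(False,False))) i)"
          using a by (cases "i = j") simp_all
      qed
      then show "\<omega>' \<in> E2" by (rule incD[OF assms(4) _ o]) (simp split: if_splits)
    qed
  qed
qed

lemma L2:
  assumes "f(j:=(True,True)) \<in> GG C D E1 E2" "j \<notin> D"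
  shows "{y. fst y} \<subseteq> {y. f(j:=y) \<in> GG C D E1 E2} \<or> {y. snd y} \<subseteq> {y. f(j:=y) \<in> GG C D E1 E2}"
proof -
  obtain P1 P2 where cf: "\<forall>i. i \<notin> C \<longrightarrow> (f(j:=(True,True))) i = (False, False)"
    and P: "P1 \<subseteq> C" "P2 \<subseteq> C" "P1 \<inter> P2 \<subseteq> D"
    and W1: "wit C E1 P1 (\<lambda>i. fst ((f(j:=(True,True))) i))"
    and W2: "wit C E2 P2 (\<lambda>i. snd ((f(j:=(True,True))) i))"
    using assms(1) by (rule GG_E)
  have jC: "j \<in> C"
  proof (rule ccontr)
    assume "j \<notin> C"
    with cf have "(f(j:=(True,True))) j = (False, False)" by blast
    then show False by simp
  qed
  note cf' = cf_upd[OF cf jC]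
  show ?thesis
  proof (cases "j \<in> P2")
    case False
    have "f(j:=y) \<in> GG C D E1 E2" if y: "fst y" for y
    proof (rule GG_I[OF cf' P])
      show "wit C E1 P1 (\<lambda>i. fst ((f(j:=y)) i))"
      proof (rule witI)
        fix \<omega>' assume o: "\<omega>' \<in> config C" and a: "\<And>i. i \<in> P1 \<Longrightarrow> \<omega>' i = fst ((f(j:=y)) i)"
        show "\<omega>' \<in> E1"
        proof (rule witD[OF W1 o])
          fix i assume "i \<in> P1" then show "\<omega>' i = fst ((f(j:=(True,True))) i)"
            using a y by (cases "i = j") simp_all
        qed
      qed
      show "wit C E2 P2 (\<lambda>i. snd ((f(j:=y)) i))"
      proof (rule witI)
        fix \<omega>' assume o: "\<omega>' \<in> config C" and a: "\<And>i. i \<in> P2 \<Longrightarrow> \<omega>' i = snd ((f(j:=y)) i)"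
        show "\<omega>' \<in> E2"
        proof (rule witD[OF W2 o])
          fix i assume "i \<in> P2" then show "\<omega>' i = snd ((f(j:=(True,True))) i)"
            using a False by (cases "i = j") simp_all
        qed
      qed
    qed
    then show ?thesis by blast
  next
    case True
    then have jP1: "j \<notin> P1" using P(3) assms(2) by blast
    have "f(j:=y) \<in> GG C D E1 E2" if y: "snd y" for y
    proof (rule GG_I[OF cf' P])
      show "wit C E1 P1 (\<lambda>i. fst ((f(j:=y)) i))"
      proof (rule witI)
        fix \<omega>' assume o: "\<omega>' \<in> config C" and a: "\<And>i. i \<in> P1 \<Longrightarrow> \<omega>' i = fst ((f(j:=y)) i)"
        show "\<omega>' \<in> E1"
        proof (rule witD[OF W1 o])
          fix i assume "i \<in> P1" then show "\<omega>' i = fst ((f(j:=(True,True))) i)"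
            using a jP1 by (cases "i = j") simp_all
        qed
      qed
      show "wit C E2 P2 (\<lambda>i. snd ((f(j:=y)) i))"
      proof (rule witI)
        fix \<omega>' assume o: "\<omega>' \<in> config C" and a: "\<And>i. i \<in> P2 \<Longrightarrow> \<omega>' i = snd ((f(j:=y)) i)"
        show "\<omega>' \<in> E2"
        proof (rule witD[OF W2 o])
          fix i assume "i \<in> P2" then show "\<omega>' i = snd ((f(j:=(True,True))) i)"
            using a y by (cases "i = j") simp_all
        qed
      qed
    qed
    then show ?thesis by blast
  qed
qed

lemma point:
  assumes "j \<in> C" "j \<notin> D" "increasing C E1" "increasing C E2" "0 \<le> q" "q \<le> 1"
    "measure_pmf.prob R {x. fst x} \<ge> q" "measure_pmf.prob R {x. snd x} \<ge> q"
  shows "measure_pmf.prob (bernoulli_pmf q) {x. f(j:=(x,x)) \<in> GG C D E1 E2}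
     \<le> measure_pmf.prob R {y. f(j:=y) \<in> GG C (insert j D) E1 E2}"
proof (cases "f(j:=(False,False)) \<in> GG C D E1 E2")
  case True
  have "{y. f(j:=y) \<in> GG C (insert j D) E1 E2} = UNIV"
    using L1[OF True assms(1,3,4)] GG_mono[of D "insert j D" C E1 E2] by blast
  then show ?thesis by (simp add: measure_pmf.prob_le_1)
next
  case F: False
  show ?thesis
  proof (cases "f(j:=(True,True)) \<in> GG C D E1 E2")
    case True
    have "{x. f(j:=(x,x)) \<in> GG C D E1 E2} \<subseteq> {True}"
    proof
      fix x assume "x \<in> {x. f(j:=(x,x)) \<in> GG C D E1 E2}"
      then have mem: "f(j:=(x,x)) \<in> GG C D E1 E2" by simp
      show "x \<in> {True}"
      proof (rule ccontr)
        assume "x \<notin> {True}"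
        then have "x = False" by simp
        with mem F show False by simp
      qed
    qed
    hence "measure_pmf.prob (bernoulli_pmf q) {x. f(j:=(x,x)) \<in> GG C D E1 E2}
       \<le> measure_pmf.prob (bernoulli_pmf q) {True}" by (intro measure_pmf.finite_measure_mono) auto
    also have "\<dots> = q" using assms(5,6) by (simp add: measure_pmf_single)
    also have "q \<le> measure_pmf.prob R {y. f(j:=y) \<in> GG C (insert j D) E1 E2}"
    proof -
      have sub: "GG C D E1 E2 \<subseteq> GG C (insert j D) E1 E2" by (rule GG_mono) auto
      from L2[OF True assms(2)] show ?thesis
      proof
        assume "{y. fst y} \<subseteq> {y. f(j:=y) \<in> GG C D E1 E2}"
        hence "measure_pmf.prob R {y. fst y} \<le> measure_pmf.prob R {y. f(j:=y) \<in> GG C (insert j D) E1 E2}"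
          using sub by (intro measure_pmf.finite_measure_mono) auto
        with assms(7) show ?thesis by linarith
      next
        assume "{y. snd y} \<subseteq> {y. f(j:=y) \<in> GG C D E1 E2}"
        hence "measure_pmf.prob R {y. snd y} \<le> measure_pmf.prob R {y. f(j:=y) \<in> GG C (insert j D) E1 E2}"
          using sub by (intro measure_pmf.finite_measure_mono) auto
        with assms(8) show ?thesis by linarith
      qed
    qed
    finally show ?thesis .
  next
    case False
    have nT: "f(j:=(True,True)) \<notin> GG C D E1 E2" using False .
    have "f(j:=(x,x)) \<notin> GG C D E1 E2" for x
    proof
      assume mem: "f(j:=(x,x)) \<in> GG C D E1 E2"
      show False
      proof (cases x)
        case True
        with mem nT show False by simp
      next
        case False
        with mem F show False by simp
      qed
    qed
    then have e: "{x. f(j:=(x,x)) \<in> GG C D E1 E2} = {}" by blast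
    show ?thesis unfolding e by simp
  qed
qed

lemma step_gen:
  assumes "finite A" "x \<notin> A"
    "\<And>f. measure_pmf.prob (F x) {y. f(x:=y) \<in> S} \<le> measure_pmf.prob (F' x) {y. f(x:=y) \<in> S'}"
    "\<And>i. i \<in> A \<Longrightarrow> F i = F' i"
    "B = insert x A"
  shows "measure_pmf.prob (Pi_pmf B d F) S \<le> measure_pmf.prob (Pi_pmf B d F') S'"
proof -
  have eq: "Pi_pmf (insert x A) d G = bind_pmf (Pi_pmf A d G) (\<lambda>f. map_pmf (\<lambda>y. f(x:=y)) (G x))" for G
    unfolding Pi_pmf_insert'[OF assms(1,2)] map_pmf_def by (rule bind_commute_pmf)
  have PA: "Pi_pmf A d F = Pi_pmf A d F'" by (rule Pi_pmf_cong) (simp_all add: assms(4))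
  have "emeasure (Pi_pmf (insert x A) d F) S \<le> emeasure (Pi_pmf (insert x A) d F') S'"
    unfolding eq PA emeasure_bind_pmf emeasure_map_pmf
  proof (rule nn_integral_mono)
    fix f
    show "emeasure (measure_pmf (F x)) ((\<lambda>y. f(x := y)) -` S) \<le> emeasure (measure_pmf (F' x)) ((\<lambda>y. f(x := y)) -` S')"
      using assms(3)[of f] by (simp add: measure_pmf.emeasure_eq_measure vimage_def)
  qed
  then show ?thesis using assms(5) by (simp add: measure_pmf.emeasure_eq_measure)
qed

definition FF :: "'c set \<Rightarrow> ('c \<Rightarrow> real) \<Rightarrow> ('c \<Rightarrow> (bool \<times> bool) pmf) \<Rightarrow> 'c \<Rightarrow> (bool \<times> bool) pmf" where
  "FF D p \<rho> i = (if i \<in> D then \<rho> i else map_pmf (\<lambda>x. (x,x)) (bernoulli_pmf (p i)))"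

lemma induct_main:
  fixes C :: "'c set" and p :: "'c \<Rightarrow> real" and \<rho> :: "'c \<Rightarrow> (bool \<times> bool) pmf"
  assumes "finite C"
    and "\<And>i. i \<in> C \<Longrightarrow> 0 \<le> p i \<and> p i \<le> 1"
    and "increasing C E1" and "increasing C E2"
    and "\<And>i. i \<in> C \<Longrightarrow> measure_pmf.prob (\<rho> i) {x. fst x} \<ge> p i"
    and "\<And>i. i \<in> C \<Longrightarrow> measure_pmf.prob (\<rho> i) {x. snd x} \<ge> p i"
    and "D \<subseteq> C"
  shows "measure_pmf.prob (Pi_pmf C (False,False) (FF {} p \<rho>)) (GG C {} E1 E2)
     \<le> measure_pmf.prob (Pi_pmf C (False,False) (FF D p \<rho>)) (GG C D E1 E2)"
proof -
  have "finite D" using assms(1,7) finite_subset by blast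
  from this assms(7) show ?thesis
  proof (induction D rule: finite_subset_induct)
    case empty
    then show ?case by simp
  next
    case (insert a D)
    have "measure_pmf.prob (Pi_pmf C (False,False) (FF D p \<rho>)) (GG C D E1 E2)
       \<le> measure_pmf.prob (Pi_pmf C (False,False) (FF (insert a D) p \<rho>)) (GG C (insert a D) E1 E2)"
    proof (rule step_gen)
      show "C = insert a (C - {a})" using insert(2) by blast
      show "finite (C - {a})" using assms(1) by simp
      show "a \<notin> C - {a}" by simp
      show "FF D p \<rho> i = FF (insert a D) p \<rho> i" if "i \<in> C - {a}" for i
        using that by (simp add: FF_def)
      fix f
      have pa: "0 \<le> p a" "p a \<le> 1" using assms(2)[OF insert(2)] by auto
      have FFa: "FF D p \<rho> a = map_pmf (\<lambda>x. (x,x)) (bernoulli_pmf (p a))"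
        using insert(3) by (simp add: FF_def)
      have vi: "(\<lambda>x. (x,x)) -` {y. f(a:=y) \<in> GG C D E1 E2} = {x. f(a:=(x,x)) \<in> GG C D E1 E2}"
        by (simp add: vimage_def)
      have "measure_pmf.prob (FF D p \<rho> a) {y. f(a:=y) \<in> GG C D E1 E2}
          = measure_pmf.prob (bernoulli_pmf (p a)) {x. f(a:=(x,x)) \<in> GG C D E1 E2}"
        unfolding FFa measure_map_pmf vi ..
      also have "measure_pmf.prob (bernoulli_pmf (p a)) {x. f(a:=(x,x)) \<in> GG C D E1 E2} \<le> measure_pmf.prob (\<rho> a) {y. f(a:=y) \<in> GG C (insert a D) E1 E2}"
        by (rule point[OF insert(2,3) assms(3,4) pa assms(5)[OF insert(2)] assms(6)[OF insert(2)]])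
      also have "\<rho> a = FF (insert a D) p \<rho> a" by (simp add: FF_def)
      finally show "measure_pmf.prob (FF D p \<rho> a) {y. f(a:=y) \<in> GG C D E1 E2}
          \<le> measure_pmf.prob (FF (insert a D) p \<rho> a) {y. f(a:=y) \<in> GG C (insert a D) E1 E2}" .
    qed
    then show ?case by (rule order_trans[OF insert.IH])
  qed
qed

lemma GG_C:
  assumes "increasing C E1" "increasing C E2"
  shows "GG C C E1 E2 = prod_event C E1 E2"
proof
  show "GG C C E1 E2 \<subseteq> prod_event C E1 E2"
  proof
    fix \<eta> assume "\<eta> \<in> GG C C E1 E2"
    then obtain P1 P2 where cf: "\<forall>i. i \<notin> C \<longrightarrow> \<eta> i = (False, False)"
      and W1: "wit C E1 P1 (\<lambda>i. fst (\<eta> i))" and W2: "wit C E2 P2 (\<lambda>i. snd (\<eta> i))"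
      by (rule GG_E)
    have c1: "(\<lambda>i. fst (\<eta> i)) \<in> config C" and c2: "(\<lambda>i. snd (\<eta> i)) \<in> config C"
      using cf unfolding config_def by auto
    have "(\<lambda>i. fst (\<eta> i)) \<in> E1" by (rule witD[OF W1 c1]) simp
    moreover have "(\<lambda>i. snd (\<eta> i)) \<in> E2" by (rule witD[OF W2 c2]) simp
    ultimately show "\<eta> \<in> prod_event C E1 E2" using cf unfolding prod_event_def by blast
  qed
next
  show "prod_event C E1 E2 \<subseteq> GG C C E1 E2"
  proof
    fix \<eta> assume h: "\<eta> \<in> prod_event C E1 E2"
    then have cf: "\<forall>i. i \<notin> C \<longrightarrow> \<eta> i = (False, False)"
      and e1: "(\<lambda>i. fst (\<eta> i)) \<in> E1" and e2: "(\<lambda>i. snd (\<eta> i)) \<in> E2"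
      unfolding prod_event_def by auto
    show "\<eta> \<in> GG C C E1 E2"
    proof (rule GG_I[OF cf order_refl order_refl])
      show "C \<inter> C \<subseteq> C" by blast
      show "wit C E1 C (\<lambda>i. fst (\<eta> i))"
      proof (rule witI)
        fix \<omega>' assume o: "\<omega>' \<in> config C" and a: "\<And>i. i \<in> C \<Longrightarrow> \<omega>' i = fst (\<eta> i)"
        have "\<omega>' = (\<lambda>i. fst (\<eta> i))"
        proof
          fix i show "\<omega>' i = fst (\<eta> i)"
          proof (cases "i \<in> C")
            case True then show ?thesis using a by simp
          next
            case False then show ?thesis using o cf unfolding config_def by simp
          qed
        qed
        then show "\<omega>' \<in> E1" using e1 by simp
      qed
      show "wit C E2 C (\<lambda>i. snd (\<eta> i))"
      proof (rule witI)
        fix \<omega>' assume o: "\<omega>' \<in> config C" and a: "\<And>i. i \<in> C \<Longrightarrow> \<omega>' i = snd (\<eta> i)"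
        have "\<omega>' = (\<lambda>i. snd (\<eta> i))"
        proof
          fix i show "\<omega>' i = snd (\<eta> i)"
          proof (cases "i \<in> C")
            case True then show ?thesis using a by simp
          next
            case False then show ?thesis using o cf unfolding config_def by simp
          qed
        qed
        then show "\<omega>' \<in> E2" using e2 by simp
      qed
    qed
  qed
qed

lemma GG_empty:
  "{\<omega>. (\<lambda>x. (x,x)) \<circ> \<omega> \<in> GG C {} E1 E2} = disj_occ C E1 E2"
proof -
  have cfg: "(\<forall>i. i \<notin> C \<longrightarrow> ((\<lambda>x. (x,x)) \<circ> \<omega>) i = (False, False)) \<longleftrightarrow> \<omega> \<in> config C" for \<omega> :: "'a \<Rightarrow> bool"
    unfolding config_def by auto
  have f1: "(\<lambda>i. fst (((\<lambda>x. (x,x)) \<circ> \<omega>) i)) = \<omega>" and f2: "(\<lambda>i. snd (((\<lambda>x. (x,x)) \<circ> \<omega>) i)) = \<omega>"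
    for \<omega> :: "'a \<Rightarrow> bool" by auto
  have e: "(P1 \<inter> P2 \<subseteq> {}) = (P1 \<inter> P2 = {})" for P1 P2 :: "'a set" by blast
  have "((\<lambda>x. (x,x)) \<circ> \<omega> \<in> GG C {} E1 E2) \<longleftrightarrow> \<omega> \<in> disj_occ C E1 E2" for \<omega>
    unfolding GG_def disj_occ_def mem_Collect_eq cfg e wit_def by (simp only: o_apply fst_conv snd_conv)
  then show ?thesis by blast
qed

theorem proposition5p2:
  fixes C :: "'c set" and p :: "'c \<Rightarrow> real" and \<rho> :: "'c \<Rightarrow> (bool \<times> bool) pmf"
    and E1 E2 :: "('c \<Rightarrow> bool) set"
  assumes "finite C"
    and "\<And>i. i \<in> C \<Longrightarrow> 0 \<le> p i \<and> p i \<le> 1"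
    and "increasing C E1" and "increasing C E2"
    and "\<And>i. i \<in> C \<Longrightarrow> measure_pmf.prob (\<rho> i) {x. fst x} \<ge> p i"
    and "\<And>i. i \<in> C \<Longrightarrow> measure_pmf.prob (\<rho> i) {x. snd x} \<ge> p i"
  shows "measure_pmf.prob (Pi_pmf C False (\<lambda>i. bernoulli_pmf (p i))) (disj_occ C E1 E2)
         \<le> measure_pmf.prob (Pi_pmf C (False, False) \<rho>) (prod_event C E1 E2)"
proof -
  have m: "Pi_pmf C (False,False) (FF {} p \<rho>) = map_pmf (\<lambda>h. (\<lambda>x. (x,x)) \<circ> h) (Pi_pmf C False (\<lambda>i. bernoulli_pmf (p i)))"
    unfolding FF_def by (simp add: Pi_pmf_map[OF assms(1)])
  have r: "Pi_pmf C (False,False) (FF C p \<rho>) = Pi_pmf C (False,False) \<rho>"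
    by (rule Pi_pmf_cong) (auto simp: FF_def)
  have "measure_pmf.prob (Pi_pmf C (False,False) (FF {} p \<rho>)) (GG C {} E1 E2)
     \<le> measure_pmf.prob (Pi_pmf C (False,False) (FF C p \<rho>)) (GG C C E1 E2)"
    by (rule induct_main[OF assms order_refl])
  also have "\<dots> = measure_pmf.prob (Pi_pmf C (False, False) \<rho>) (prod_event C E1 E2)"
    using r GG_C[OF assms(3,4)] by simp
  also have "measure_pmf.prob (Pi_pmf C (False,False) (FF {} p \<rho>)) (GG C {} E1 E2)
     = measure_pmf.prob (Pi_pmf C False (\<lambda>i. bernoulli_pmf (p i))) (disj_occ C E1 E2)"
    unfolding m measure_map_pmf vimage_def GG_empty by simp
  finally show ?thesis .
qed

end
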